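(* Let $A$ be an Archimedean semiprime $f$-algebra and let $A_b=\{a\in A: a^2\le\mu|a| \text{ for some }\mu\in(0,\infty)\}$. Then $A_b$ is simultaneously a subalgebra and an order ideal of $A$.
   Context: An $f$-algebra is a real associative algebra that is a vector lattice with $A_+A_+\subseteq A_+$ and such that $a\wedge b=0$ implies $ac\wedge b=ca\wedge b=0$ for all $c\in A_+$; it is semiprime if $0$ is its only nilpotent element. An order ideal is a solid vector subspace. *)

theory Defs
  imports Complex_Main
begin

definition vabs :: "'a::{ordered_real_vector, lattice} \<Rightarrow> 'a" where
  "vabs a = sup a (- a)"

definition archimedean_vl :: "'a::{ordered_real_vector, lattice} itself \<Rightarrow> bool" where
  "archimedean_vl _ \<longleftrightarrow>
     (\<forall>a b :: 'a. 0 \<le> a \<longrightarrow> (\<forall>n::nat. real n *\<^sub>R a \<le> b) \<longrightarrow> a = 0)"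

definition f_algebra :: "'a::{real_algebra, ordered_real_vector, lattice} itself \<Rightarrow> bool" where
  "f_algebra _ \<longleftrightarrow>
     (\<forall>a b :: 'a. 0 \<le> a \<longrightarrow> 0 \<le> b \<longrightarrow> 0 \<le> a * b) \<and>
     (\<forall>a b c :: 'a. inf a b = 0 \<longrightarrow> 0 \<le> c \<longrightarrow> inf (a * c) b = 0 \<and> inf (c * a) b = 0)"

text \<open>pow1 a n = a^(n+1) (the algebra need not be unital).\<close>
fun pow1 :: "'a::semigroup_mult \<Rightarrow> nat \<Rightarrow> 'a" where
  "pow1 a 0 = a"
| "pow1 a (Suc n) = a * pow1 a n"

definition nilpotent_elem :: "'a::{semigroup_mult, zero} \<Rightarrow> bool" where
  "nilpotent_elem a \<longleftrightarrow> (\<exists>n. pow1 a n = 0)"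

definition semiprime :: "'a::{semigroup_mult, zero} itself \<Rightarrow> bool" where
  "semiprime _ \<longleftrightarrow> (\<forall>a :: 'a. nilpotent_elem a \<longrightarrow> a = 0)"

definition subalgebra :: "'a::real_algebra set \<Rightarrow> bool" where
  "subalgebra S \<longleftrightarrow> subspace S \<and> (\<forall>x\<in>S. \<forall>y\<in>S. x * y \<in> S)"

definition order_ideal :: "'a::{ordered_real_vector, lattice} set \<Rightarrow> bool" where
  "order_ideal I \<longleftrightarrow> subspace I \<and> (\<forall>a b. b \<in> I \<longrightarrow> vabs a \<le> vabs b \<longrightarrow> a \<in> I)"

definition bounded_part :: "'a::{real_algebra, ordered_real_vector, lattice} set" where
  "bounded_part = {a. \<exists>\<mu>::real. \<mu> > 0 \<and> a * a \<le> \<mu> *\<^sub>R vabs a}"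

end

theory Submission imports Defs "HOL-Library.Lattice_Algebras" begin
interpretation LG: lattice_ab_group_add "(+)" "0::'a::{ordered_real_vector,lattice}" "(-)" uminus "(\<le>)" "(<)" inf sup
  by unfold_locales

lemma B1: "(w::'a::{ordered_real_vector,lattice}) = sup w 0 - sup (-w) 0"
proof -
  have "sup (-w) 0 = - inf w 0" by (simp add: LG.neg_inf_eq_sup)
  then have "sup w 0 - sup (-w) 0 = sup w 0 + inf w 0" by simp
  also have "\<dots> = w + 0" using LG.add_eq_inf_sup[of w 0] by simp
  finally show ?thesis by simp
qed

lemma B4: "0 \<le> vabs (w::'a::{ordered_real_vector,lattice})"
proof -
  have "w + (-w) \<le> sup w (-w) + sup w (-w)" by (intro add_mono) simp_all
  then show ?thesis unfolding vabs_def by simp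
qed

lemma B3: "vabs (w::'a::{ordered_real_vector,lattice}) = sup w 0 + sup (-w) 0"
proof -
  have "sup w 0 + sup (-w) 0 = sup (sup w 0 + (-w)) (sup w 0 + 0)"
    by (simp add: LG.add_sup_distrib_left)
  also have "sup w 0 + (-w) = sup 0 (-w)" using LG.add_sup_distrib_right[of w 0 "-w"] by simp
  finally have "sup w 0 + sup (-w) 0 = sup (sup w (-w)) 0"
    by (simp add: sup_commute sup_left_commute)
  then show ?thesis using B4[of w] unfolding vabs_def by (simp add: sup.absorb1)
qed

lemma B2: "inf (sup (w::'a::{ordered_real_vector,lattice}) 0) (sup (-w) 0) = 0"
proof -
  let ?p = "sup w 0" and ?n = "sup (-w) 0"
  have "?p + ?n = sup ?p ?n + inf ?p ?n" by (rule LG.add_eq_inf_sup)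
  moreover have "sup ?p ?n = vabs w" unfolding vabs_def
  proof -
    have "sup ?p ?n = sup (sup w (-w)) 0" by (simp add: sup_commute sup_left_commute)
    also have "\<dots> = sup w (-w)"
    proof -
      have "w + (-w) \<le> sup w (-w) + sup w (-w)" by (intro add_mono) simp_all
      then have "0 \<le> sup w (-w)" by simp
      then show ?thesis by (simp add: sup.absorb1)
    qed
    finally show "sup ?p ?n = sup w (-w)" .
  qed
  ultimately show ?thesis using B3[of w] by simp
qed

lemma VP: "0 \<le> z \<Longrightarrow> vabs (z::'a::{ordered_real_vector,lattice}) = z"
  unfolding vabs_def by (metis neg_le_0_iff_le order_trans sup.absorb1)

lemma B5: "vabs (vabs (w::'a::{ordered_real_vector,lattice})) = vabs w"
proof -
  have "- vabs w \<le> vabs w" using B4[of w] by (meson neg_le_0_iff_le order_trans)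
  then show ?thesis by (simp add: vabs_def sup.absorb1)
qed

lemma scale_sup: "(t::real) > 0 \<Longrightarrow> t *\<^sub>R sup x y = sup (t *\<^sub>R x) (t *\<^sub>R (y::'a::{ordered_real_vector,lattice}))"
proof (rule antisym)
  assume t: "t > 0"
  show "sup (t *\<^sub>R x) (t *\<^sub>R y) \<le> t *\<^sub>R sup x y"
    using t by (simp add: scaleR_left_mono)
  have "x \<le> inverse t *\<^sub>R sup (t *\<^sub>R x) (t *\<^sub>R y)"
    using scaleR_left_mono[OF sup_ge1[of "t *\<^sub>R x" "t *\<^sub>R y"], of "inverse t"] t by simp
  moreover have "y \<le> inverse t *\<^sub>R sup (t *\<^sub>R x) (t *\<^sub>R y)"
    using scaleR_left_mono[OF sup_ge2[of "t *\<^sub>R y" "t *\<^sub>R x"], of "inverse t"] t by simp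
  ultimately have "sup x y \<le> inverse t *\<^sub>R sup (t *\<^sub>R x) (t *\<^sub>R y)" by simp
  then have le: "t *\<^sub>R sup x y \<le> t *\<^sub>R (inverse t *\<^sub>R sup (t *\<^sub>R x) (t *\<^sub>R y))"
    using t by (intro scaleR_left_mono) simp_all
  have eq: "t *\<^sub>R (inverse t *\<^sub>R sup (t *\<^sub>R x) (t *\<^sub>R y)) = sup (t *\<^sub>R x) (t *\<^sub>R y)"
    using t by (simp only: scaleR_scaleR) simp
  show "t *\<^sub>R sup x y \<le> sup (t *\<^sub>R x) (t *\<^sub>R y)" using le unfolding eq .
qed

lemma B6: "vabs ((t::real) *\<^sub>R (w::'a::{ordered_real_vector,lattice})) = \<bar>t\<bar> *\<^sub>R vabs w"
proof -
  consider "t > 0" | "t = 0" | "t < 0" by linarith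
  then show ?thesis
  proof cases
    case 1 then show ?thesis unfolding vabs_def by (simp add: scale_sup)
  next
    case 2 then show ?thesis by (simp add: vabs_def)
  next
    case 3
    have "vabs (t *\<^sub>R w) = sup ((-t) *\<^sub>R (-w)) ((-t) *\<^sub>R w)" unfolding vabs_def by simp
    also have "\<dots> = (-t) *\<^sub>R sup (-w) w" using 3 by (simp only: scale_sup)
    also have "\<dots> = \<bar>t\<bar> *\<^sub>R vabs w" using 3 by (simp add: vabs_def sup_commute)
    finally show ?thesis .
  qed
qed

lemma B7: "0 \<le> p \<Longrightarrow> 0 \<le> q \<Longrightarrow> vabs (p - q) \<le> p + (q::'a::{ordered_real_vector,lattice})"
  unfolding vabs_def
  by (simp add: add_increasing2 add_increasing diff_le_eq)

context
  fixes T :: "'a::{real_algebra, ordered_real_vector, lattice} itself"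
  assumes F: "f_algebra TYPE('a)"
begin

lemma M1: "0 \<le> a \<Longrightarrow> 0 \<le> b \<Longrightarrow> 0 \<le> (a::'a) * b"
  using F unfolding f_algebra_def by blast

lemma AX: "inf a b = 0 \<Longrightarrow> 0 \<le> c \<Longrightarrow> inf (a * c) b = 0 \<and> inf (c * a) (b::'a) = 0"
  using F unfolding f_algebra_def by blast

lemma M2r: "x \<le> y \<Longrightarrow> 0 \<le> c \<Longrightarrow> x * c \<le> (y::'a) * c"
  using M1[of "y - x" c] by (simp add: algebra_simps)

lemma M2l: "x \<le> y \<Longrightarrow> 0 \<le> c \<Longrightarrow> c * x \<le> c * (y::'a)"
  using M1[of c "y - x"] by (simp add: algebra_simps)

lemma D: "inf a b = 0 \<Longrightarrow> a * (b::'a) = 0"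
proof -
  assume h: "inf a b = 0"
  have b0: "0 \<le> b" using h by (metis inf.cobounded2)
  have a0: "0 \<le> a" using h by (metis inf.cobounded1)
  have "inf (a * b) b = 0" using AX[OF h b0] by blast
  then have "inf b (a * b) = 0" by (simp add: inf_commute)
  then have "inf (a * b) (a * b) = 0" using AX[OF _ a0, of b "a*b"] by blast
  then show ?thesis by simp
qed

lemma SQ: "w * w = vabs w * vabs (w::'a)"
proof -
  define p where "p = sup w 0"
  define n where "n = sup (-w) 0"
  have d: "inf p n = 0" unfolding p_def n_def by (rule B2)
  have pn: "p * n = 0" by (rule D[OF d])
  have np: "n * p = 0" by (rule D) (metis d inf_commute)
  have w: "w = p - n" unfolding p_def n_def by (rule B1)
  have v: "vabs w = p + n" unfolding p_def n_def by (rule B3)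
  have "(p - n) * (p - n) = p * p + n * n" using pn np by (simp add: algebra_simps)
  moreover have "(p + n) * (p + n) = p * p + n * n" using pn np by (simp add: algebra_simps)
  ultimately show ?thesis using w v by simp
qed

lemma SQpos: "0 \<le> w * (w::'a)"
  using SQ[of w] M1[OF B4 B4, of w w] by simp

lemma PosAnn: "w * a \<le> 0 \<Longrightarrow> 0 \<le> a \<Longrightarrow> sup w 0 * (a::'a) = 0"
proof -
  assume wa: "w * a \<le> 0" and a0: "0 \<le> a"
  let ?p = "sup w 0" and ?n = "sup (-w) 0"
  have d: "inf ?p ?n = 0" by (rule B2)
  have "inf (?p * a) ?n = 0" using AX[OF d a0] by blast
  then have "inf ?n (?p * a) = 0" by (simp add: inf_commute)
  then have d2: "inf (?n * a) (?p * a) = 0" using AX[OF _ a0] by blast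
  have "w * a = ?p * a - ?n * a" using B1[of w] by (metis left_diff_distrib)
  then have "?p * a \<le> ?n * a" using wa by simp
  then have "inf (?n * a) (?p * a) = ?p * a" by (simp add: inf.absorb2)
  then show ?thesis using d2 by simp
qed

lemma SP: "semiprime TYPE('a) \<Longrightarrow> 0 \<le> n \<Longrightarrow> 0 \<le> a \<Longrightarrow> n * a = 0 \<Longrightarrow> inf n (a::'a) = 0"
proof -
  assume sp: "semiprime TYPE('a)" and n0: "0 \<le> n" and a0: "0 \<le> a" and na: "n * a = 0"
  let ?m = "inf n a"
  have m0: "0 \<le> ?m" using n0 a0 by simp
  have "?m * ?m \<le> n * ?m" using M2r[OF _ m0] by simp
  also have "\<dots> \<le> n * a" using M2l[OF _ n0] by simp
  finally have "?m * ?m \<le> 0" using na by simp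
  moreover have "0 \<le> ?m * ?m" using M1[OF m0 m0] .
  ultimately have "pow1 ?m 1 = 0" by simp
  then have "nilpotent_elem ?m" unfolding nilpotent_elem_def by blast
  then show ?thesis using sp unfolding semiprime_def by blast
qed

lemma L: "semiprime TYPE('a) \<Longrightarrow> 0 \<le> a \<Longrightarrow> a * a \<le> \<mu> *\<^sub>R a \<Longrightarrow> 0 \<le> b \<Longrightarrow> 0 \<le> \<mu> \<Longrightarrow> b * a \<le> \<mu> *\<^sub>R (b::'a)"
proof -
  assume sp: "semiprime TYPE('a)" and a0: "0 \<le> a" and aa: "a * a \<le> \<mu> *\<^sub>R a" and b0: "0 \<le> b" and mu: "0 \<le> \<mu>"
  define w where "w = b * a - \<mu> *\<^sub>R b"
  let ?n = "sup w 0"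
  have "w * a = b * (a * a - \<mu> *\<^sub>R a)" unfolding w_def by (simp add: algebra_simps)
  moreover have "b * (a * a - \<mu> *\<^sub>R a) \<le> 0"
    using M2l[OF aa b0] by (simp add: algebra_simps)
  ultimately have "w * a \<le> 0" by simp
  then have "?n * a = 0" using PosAnn a0 by blast
  then have "inf ?n a = 0" using SP[OF sp _ a0] by simp
  then have "inf a ?n = 0" by (simp add: inf_commute)
  then have i: "inf (b * a) ?n = 0" using AX[OF _ b0] by blast
  have "?n \<le> b * a" using M1[OF b0 a0] b0 mu unfolding w_def
    by (simp add: scaleR_nonneg_nonneg)
  then have "?n = 0" using i by (simp add: inf.absorb2)
  then have "w \<le> 0" by (metis sup.cobounded1)
  then show ?thesis unfolding w_def by simp
qed

lemma BP: "x \<in> bounded_part \<longleftrightarrow> (\<exists>\<mu>::real. \<mu> > 0 \<and> x * x \<le> \<mu> *\<^sub>R vabs (x::'a))"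
  unfolding bounded_part_def by simp

lemma Solid: "semiprime TYPE('a) \<Longrightarrow> y \<in> bounded_part \<Longrightarrow> vabs x \<le> vabs y \<Longrightarrow> (x::'a) \<in> bounded_part"
proof -
  assume sp: "semiprime TYPE('a)" and y: "y \<in> bounded_part" and xy: "vabs x \<le> vabs y"
  obtain \<mu> where mu: "\<mu> > 0" and yy: "y * y \<le> \<mu> *\<^sub>R vabs y" using y BP by blast
  have aa: "vabs y * vabs y \<le> \<mu> *\<^sub>R vabs y" using yy SQ[of y] by simp
  have "vabs x * vabs y \<le> \<mu> *\<^sub>R vabs x" using L[OF sp B4 aa B4] mu by simp
  moreover have "vabs x * vabs x \<le> vabs x * vabs y" using M2l[OF xy B4] .
  ultimately have "x * x \<le> \<mu> *\<^sub>R vabs x" using SQ[of x] by simp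
  then show ?thesis using mu BP by blast
qed

lemma AbsBP: "x \<in> bounded_part \<Longrightarrow> vabs (x::'a) \<in> bounded_part"
  using BP SQ B5 by metis

lemma AddBP: "semiprime TYPE('a) \<Longrightarrow> x \<in> bounded_part \<Longrightarrow> y \<in> bounded_part \<Longrightarrow> x + (y::'a) \<in> bounded_part"
proof -
  assume sp: "semiprime TYPE('a)" and x: "x \<in> bounded_part" and y: "y \<in> bounded_part"
  obtain \<mu> where mu: "\<mu> > 0" and xx: "x * x \<le> \<mu> *\<^sub>R vabs x" using x BP by blast
  obtain \<nu> where nu: "\<nu> > 0" and yy: "y * y \<le> \<nu> *\<^sub>R vabs y" using y BP by blast
  define a where "a = vabs x"
  define b where "b = vabs y"
  have a0: "0 \<le> a" and b0: "0 \<le> b" unfolding a_def b_def by (simp_all add: B4)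
  have aa: "a * a \<le> \<mu> *\<^sub>R a" using xx SQ[of x] unfolding a_def by simp
  have bb: "b * b \<le> \<nu> *\<^sub>R b" using yy SQ[of y] unfolding b_def by simp
  have "0 \<le> (a - b) * (a - b)" by (rule SQpos)
  then have ab: "a * b + b * a \<le> a * a + b * b" by (simp add: algebra_simps)
  have "(a + b) * (a + b) = a * a + b * b + (a * b + b * a)" by (simp add: algebra_simps)
  also have "\<dots> \<le> 2 *\<^sub>R (a * a) + 2 *\<^sub>R (b * b)" using ab by (simp add: scaleR_2 algebra_simps)
  also have "\<dots> \<le> 2 *\<^sub>R (\<mu> *\<^sub>R a) + 2 *\<^sub>R (\<nu> *\<^sub>R b)"
    using aa bb by (intro add_mono scaleR_left_mono) simp_all
  also have "\<dots> \<le> 2 *\<^sub>R ((\<mu> + \<nu>) *\<^sub>R a) + 2 *\<^sub>R ((\<mu> + \<nu>) *\<^sub>R b)"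
    using a0 b0 mu nu by (intro add_mono scaleR_left_mono scaleR_right_mono) simp_all
  also have "\<dots> = (2 * (\<mu> + \<nu>)) *\<^sub>R (a + b)" by (simp add: algebra_simps)
  finally have "(a + b) * (a + b) \<le> (2 * (\<mu> + \<nu>)) *\<^sub>R vabs (a + b)"
    using VP[OF add_nonneg_nonneg[OF a0 b0]] by simp
  then have s: "a + b \<in> bounded_part" using mu nu BP by (metis add_pos_pos mult_pos_pos zero_less_numeral)
  have "- x - y = (-x) + (-y)" by simp
  also have "\<dots> \<le> sup x (-x) + sup y (-y)" by (intro add_mono) simp_all
  finally have "vabs (x + y) \<le> a + b" unfolding a_def b_def vabs_def
    by (simp add: add_mono)
  also have "a + b = vabs (a + b)" using VP[OF add_nonneg_nonneg[OF a0 b0]] by simp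
  finally show ?thesis using Solid[OF sp s] by blast
qed

lemma ScaleBP: "x \<in> bounded_part \<Longrightarrow> t *\<^sub>R (x::'a) \<in> bounded_part"
proof (cases "t = 0")
  case True
  have "(0::'a) * 0 \<le> 1 *\<^sub>R vabs 0" by (simp add: vabs_def)
  then have "(0::'a) \<in> bounded_part" using BP[of 0] by (meson zero_less_one)
  then show ?thesis using True by simp
next
  case False
  assume x: "x \<in> bounded_part"
  obtain \<mu> where mu: "\<mu> > 0" and xx: "x * x \<le> \<mu> *\<^sub>R vabs x" using x BP by blast
  have "(t *\<^sub>R x) * (t *\<^sub>R x) = (t * t) *\<^sub>R (x * x)" by simp
  also have "\<dots> \<le> (t * t) *\<^sub>R (\<mu> *\<^sub>R vabs x)" using xx by (intro scaleR_left_mono) simp_all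
  also have "\<dots> = (\<bar>t\<bar> * \<mu>) *\<^sub>R vabs (t *\<^sub>R x)" by (simp add: B6 abs_mult_self_eq)
  finally show ?thesis using BP False mu by (metis mult_pos_pos zero_less_abs_iff)
qed

lemma MultBP: "semiprime TYPE('a) \<Longrightarrow> x \<in> bounded_part \<Longrightarrow> y \<in> bounded_part \<Longrightarrow> x * (y::'a) \<in> bounded_part"
proof -
  assume sp: "semiprime TYPE('a)" and x: "x \<in> bounded_part" and y: "y \<in> bounded_part"
  obtain \<mu> where mu: "\<mu> > 0" and xx: "x * x \<le> \<mu> *\<^sub>R vabs x" using x BP by blast
  obtain \<nu> where nu: "\<nu> > 0" and yy: "y * y \<le> \<nu> *\<^sub>R vabs y" using y BP by blast
  define a where "a = vabs x"
  define b where "b = vabs y"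
  have a0: "0 \<le> a" and b0: "0 \<le> b" unfolding a_def b_def by (simp_all add: B4)
  have aa: "a * a \<le> \<mu> *\<^sub>R a" using xx SQ[of x] unfolding a_def by simp
  have bb: "b * b \<le> \<nu> *\<^sub>R b" using yy SQ[of y] unfolding b_def by simp
  have ab0: "0 \<le> a * b" using M1[OF a0 b0] .
  have "(a * b) * a \<le> \<mu> *\<^sub>R (a * b)" using L[OF sp a0 aa ab0] mu by simp
  then have "((a * b) * a) * b \<le> (\<mu> *\<^sub>R (a * b)) * b" using M2r b0 by blast
  moreover have "(a * b) * (a * b) = ((a * b) * a) * b" by (simp add: mult.assoc)
  moreover have "(\<mu> *\<^sub>R (a * b)) * b = \<mu> *\<^sub>R (a * (b * b))" by (simp add: mult.assoc)
  moreover have "a * (b * b) \<le> a * (\<nu> *\<^sub>R b)" using M2l[OF bb a0] .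
  ultimately have "(a * b) * (a * b) \<le> (\<mu> * \<nu>) *\<^sub>R (a * b)"
    using mu by (metis (no_types, lifting) less_imp_le mult_scaleR_right order_trans scaleR_left_mono scaleR_scaleR)
  moreover have "vabs (a * b) = a * b" using ab0 unfolding vabs_def
    by (simp add: sup.absorb1 order_trans[OF _ ab0])
  ultimately have s: "a * b \<in> bounded_part" using BP mu nu by (metis mult_pos_pos)
  define px where "px = sup x 0"
  define nx where "nx = sup (-x) 0"
  define py where "py = sup y 0"
  define ny where "ny = sup (-y) 0"
  have "x * y = (px - nx) * (py - ny)" unfolding px_def nx_def py_def ny_def using B1 by metis
  also have "\<dots> = (px * py + nx * ny) - (px * ny + nx * py)" by (simp add: algebra_simps)
  finally have e1: "x * y = (px * py + nx * ny) - (px * ny + nx * py)" .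
  have "a * b = (px + nx) * (py + ny)" unfolding a_def b_def px_def nx_def py_def ny_def using B3 by metis
  also have "\<dots> = (px * py + nx * ny) + (px * ny + nx * py)" by (simp add: algebra_simps)
  finally have e2: "a * b = (px * py + nx * ny) + (px * ny + nx * py)" .
  have p0: "0 \<le> px" "0 \<le> nx" "0 \<le> py" "0 \<le> ny" unfolding px_def nx_def py_def ny_def by simp_all
  have "vabs (x * y) \<le> a * b" unfolding e1 e2
    by (intro B7 add_nonneg_nonneg M1 p0)
  also have "a * b = vabs (a * b)" using ab0 unfolding vabs_def
    by (simp add: sup.absorb1 order_trans[OF _ ab0])
  finally show ?thesis using Solid[OF sp s] by blast
qed

end

theorem theorem6:
  assumes "f_algebra TYPE('a::{real_algebra, ordered_real_vector, lattice})"
    and "archimedean_vl TYPE('a)"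
    and "semiprime TYPE('a)"
  shows "subalgebra (bounded_part :: 'a set) \<and> order_ideal (bounded_part :: 'a set)"
proof -
  note F = assms(1) and sp = assms(3)
  have z: "(0::'a) \<in> bounded_part" using ScaleBP[OF F, of 0 0] ScaleBP[OF F] by (metis scale_zero_left
      AbsBP[OF F] BP[OF F] mult_zero_left order_refl vabs_def sup.idem neg_0_equal_iff_equal scaleR_zero_right zero_less_one)
  have sub: "subspace (bounded_part :: 'a set)"
    unfolding subspace_def using z AddBP[OF F sp] ScaleBP[OF F] by blast
  show ?thesis
    unfolding subalgebra_def order_ideal_def
    using sub MultBP[OF F sp] Solid[OF F sp] by blast
qed

end
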